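(* Consider the system $\dot x(t)=f(x(t),u(t))$, $y(t)=h(x(t),u(t))$ with $x(t)\in X\subset\mathbb{R}^n$, $u(t)\in U\subset\mathbb{R}^m$, $y(t)\in Y\subset\mathbb{R}^m$, where trajectories remain in $X$ and $Y$, and let $\phi(t,t_0,x_0,u_{t_0:t})$ denote the state at time $t$ from state $x_0$ at time $t_0$ under input $u_{t_0:t}=\{u(\tau):\tau\in[t_0,t]\}$. Let $S:X\to\mathbb{R}_{\ge0}$ with $S(\mathbf{0})=0$ be a storage function, and for $t_1>t_0\ge0$, $x_0\in X$, $u_{t_0:t_1}\subset U$, with $y$ the resulting output and $x_1=\phi(t_1,t_0,x_0,u_{t_0:t_1})$, put $$\psi_\gamma=\frac{\int_{t_0}^{t_1}y^\mathsf{T}y\,dt+(S(x_1)-S(x_0))}{\int_{t_0}^{t_1}u^\mathsf{T}u\,dt},\quad \psi_\nu=\frac{\int_{t_0}^{t_1}u^\mathsf{T}y\,dt-(S(x_1)-S(x_0))}{\int_{t_0}^{t_1}u^\mathsf{T}u\,dt},\quad \psi_\rho=\frac{\int_{t_0}^{t_1}u^\mathsf{T}y\,dt-(S(x_1)-S(x_0))}{\int_{t_0}^{t_1}y^\mathsf{T}y\,dt},$$ defined whenever the denominator is nonzero, and let $\gamma_*^2=\max\psi_\gamma$, $\nu_*=\min\psi_\nu$, $\rho_*=\min\psi_\rho$ over all such $(t_1,t_0,x_0,u_{t_0:t_1})$ with nonzero denominator. Suppose a given input-output profile $(u(t),y(t))$, $t\in[t_o,t_f)$, with state trajectory $x(t)$,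 satisfies $|\tfrac{d}{dt}S(x(t))|\le K_s$ for all $t\in[t_o,t_f)$, for a known constant $K_s$. For $[t_0,t_1)\subseteq[t_o,t_f)$ define $$\hat\psi_\gamma(t_0,t_1)=\frac{\int_{t_0}^{t_1}y^\mathsf{T}y\,dt-K_s(t_1-t_0)}{\int_{t_0}^{t_1}u^\mathsf{T}u\,dt},\ \hat\psi_\nu(t_0,t_1)=\frac{\int_{t_0}^{t_1}u^\mathsf{T}y\,dt+K_s(t_1-t_0)}{\int_{t_0}^{t_1}u^\mathsf{T}u\,dt},\ \hat\psi_\rho(t_0,t_1)=\frac{\int_{t_0}^{t_1}u^\mathsf{T}y\,dt+K_s(t_1-t_0)}{\int_{t_0}^{t_1}y^\mathsf{T}y\,dt},$$ and let $\hat\gamma_*^2=\max\hat\psi_\gamma$, $\hat\nu_*=\min\hat\psi_\nu$, $\hat\rho_*=\min\hat\psi_\rho$, each over the intervals $[t_0,t_1)\subseteq[t_o,t_f)$, $t_0<t_1$, on which the respective denominator is nonzero. Then $\hat\gamma_*^2\le\gamma_*^2$, $\hat\nu_*\ge\nu_*$ and $\hat\rho_*\ge\rho_*$.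
   Context: The quantities $\gamma_*^2,\nu_*,\rho_*$ are the paper's optimal $\mathcal{L}_2$-gain, input feedforward passivity and output feedback passivity indices, expressed through the fractional functions above. *)

theory Defs
  imports "HOL-Analysis.Analysis"
begin

text \<open>Then x t0 = x0 and x t1 = phi(t1,t0,x0,u).\<close>

definition is_traj ::
  "(real^'n \<Rightarrow> real^'m \<Rightarrow> real^'n) \<Rightarrow> (real^'n \<Rightarrow> real^'m \<Rightarrow> real^'m) \<Rightarrow>
   (real^'n) set \<Rightarrow> (real^'m) set \<Rightarrow> (real^'m) set \<Rightarrow> real \<Rightarrow> real \<Rightarrow>
   (real \<Rightarrow> real^'n) \<Rightarrow> (real \<Rightarrow> real^'m) \<Rightarrow> bool" where
  "is_traj f h X U Y t0 t1 x u \<longleftrightarrow> 0 \<le> t0 \<and> t0 < t1 \<and>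
     (\<forall>t\<in>{t0..t1}. (x has_vector_derivative f (x t) (u t)) (at t within {t0..t1})
        \<and> x t \<in> X \<and> u t \<in> U \<and> h (x t) (u t) \<in> Y)"

definition int_yy :: "(real^'n \<Rightarrow> real^'m \<Rightarrow> real^'m) \<Rightarrow> (real \<Rightarrow> real^'n) \<Rightarrow> (real \<Rightarrow> real^'m) \<Rightarrow> real \<Rightarrow> real \<Rightarrow> real" where
  "int_yy h x u t0 t1 = integral {t0..t1} (\<lambda>t. h (x t) (u t) \<bullet> h (x t) (u t))"

definition int_uy :: "(real^'n \<Rightarrow> real^'m \<Rightarrow> real^'m) \<Rightarrow> (real \<Rightarrow> real^'n) \<Rightarrow> (real \<Rightarrow> real^'m) \<Rightarrow> real \<Rightarrow> real \<Rightarrow> real" where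
  "int_uy h x u t0 t1 = integral {t0..t1} (\<lambda>t. u t \<bullet> h (x t) (u t))"

definition int_uu :: "(real \<Rightarrow> real^'m) \<Rightarrow> real \<Rightarrow> real \<Rightarrow> real" where
  "int_uu u t0 t1 = integral {t0..t1} (\<lambda>t. u t \<bullet> u t)"

definition psi_gamma_vals where
  "psi_gamma_vals f h X U Y S =
    {(int_yy h x u t0 t1 + (S (x t1) - S (x t0))) / int_uu u t0 t1 | t0 t1 x u.
       is_traj f h X U Y t0 t1 x u \<and> int_uu u t0 t1 \<noteq> 0}"

definition psi_nu_vals where
  "psi_nu_vals f h X U Y S =
    {(int_uy h x u t0 t1 - (S (x t1) - S (x t0))) / int_uu u t0 t1 | t0 t1 x u.
       is_traj f h X U Y t0 t1 x u \<and> int_uu u t0 t1 \<noteq> 0}"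

definition psi_rho_vals where
  "psi_rho_vals f h X U Y S =
    {(int_uy h x u t0 t1 - (S (x t1) - S (x t0))) / int_yy h x u t0 t1 | t0 t1 x u.
       is_traj f h X U Y t0 t1 x u \<and> int_yy h x u t0 t1 \<noteq> 0}"

definition hat_gamma_vals where
  "hat_gamma_vals h Ks to tf x u =
    {(int_yy h x u t0 t1 - Ks * (t1 - t0)) / int_uu u t0 t1 | t0 t1.
       to \<le> t0 \<and> t0 < t1 \<and> t1 \<le> tf \<and> int_uu u t0 t1 \<noteq> 0}"

definition hat_nu_vals where
  "hat_nu_vals h Ks to tf x u =
    {(int_uy h x u t0 t1 + Ks * (t1 - t0)) / int_uu u t0 t1 | t0 t1.
       to \<le> t0 \<and> t0 < t1 \<and> t1 \<le> tf \<and> int_uu u t0 t1 \<noteq> 0}"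

definition hat_rho_vals where
  "hat_rho_vals h Ks to tf x u =
    {(int_uy h x u t0 t1 + Ks * (t1 - t0)) / int_yy h x u t0 t1 | t0 t1.
       to \<le> t0 \<and> t0 < t1 \<and> t1 \<le> tf \<and> int_yy h x u t0 t1 \<noteq> 0}"

definition is_max_of :: "real set \<Rightarrow> real \<Rightarrow> bool" where
  "is_max_of A m \<longleftrightarrow> m \<in> A \<and> (\<forall>a\<in>A. a \<le> m)"
definition is_min_of :: "real set \<Rightarrow> real \<Rightarrow> bool" where
  "is_min_of A m \<longleftrightarrow> m \<in> A \<and> (\<forall>a\<in>A. m \<le> a)"

end

theory Submission
  imports Defs
begin

lemma S_bound:
  fixes g D :: "real \<Rightarrow> real"
  assumes dS: "\<forall>t\<in>{to..<tf}. (g has_real_derivative D t) (at t within {to..tf}) \<and> \<bar>D t\<bar> \<le> Ks"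
    and cont: "continuous_on {to..tf} g"
    and h: "to \<le> t0" "t0 < t1" "t1 \<le> tf"
  shows "\<bar>g t1 - g t0\<bar> \<le> Ks * (t1 - t0)"
proof -
  have der: "(g has_real_derivative D z) (at z)" if "t0 < z" "z < t1" for z
  proof -
    have "to < z" "z < tf" using that h by auto
    then have "at z within {to..tf} = at z" by (simp add: at_within_Icc_at)
    moreover have "(g has_real_derivative D z) (at z within {to..tf})" using dS \<open>to < z\<close> \<open>z < tf\<close> by auto
    ultimately show ?thesis by simp
  qed
  have c: "continuous_on {t0..t1} g"
    using cont h by (rule_tac continuous_on_subset) auto
  obtain l z where z: "t0 < z" "z < t1" "DERIV g z :> l" "g t1 - g t0 = (t1 - t0) * l"
    using MVT[OF h(2) c] der real_differentiable_def by blast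
  have "l = D z" using der[OF z(1,2)] z(3) DERIV_unique by blast
  moreover have "\<bar>D z\<bar> \<le> Ks" using dS z h by auto
  ultimately have "\<bar>g t1 - g t0\<bar> = (t1 - t0) * \<bar>D z\<bar>" using z h by (simp add: abs_mult)
  also have "\<dots> \<le> (t1 - t0) * Ks" using \<open>\<bar>D z\<bar> \<le> Ks\<close> h by (intro mult_left_mono) auto
  finally show ?thesis by (simp add: mult.commute)
qed

lemma traj_sub:
  assumes "is_traj f h X U Y to tf x u" "to \<le> t0" "t0 < t1" "t1 \<le> tf"
  shows "is_traj f h X U Y t0 t1 x u"
proof -
  have P: "\<forall>t\<in>{to..tf}. (x has_vector_derivative f (x t) (u t)) (at t within {to..tf}) \<and>
        x t \<in> X \<and> u t \<in> U \<and> h (x t) (u t) \<in> Y" "0 \<le> to" using assms(1) unfolding is_traj_def by blast+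
  have sub: "{t0..t1} \<subseteq> {to..tf}" using assms(2-4) by auto
  have "\<forall>t\<in>{t0..t1}. (x has_vector_derivative f (x t) (u t)) (at t within {t0..t1}) \<and> x t \<in> X \<and> u t \<in> U \<and> h (x t) (u t) \<in> Y"
    using P(1) sub has_vector_derivative_within_subset[OF _ sub] by blast
  then show ?thesis unfolding is_traj_def using P(2) assms(2-4) by auto
qed

lemma int_pos:
  fixes F :: "real \<Rightarrow> real"
  assumes "\<And>t. 0 \<le> F t" "integral {a..b} F \<noteq> 0"
  shows "0 < integral {a..b} F"
proof (cases "F integrable_on {a..b}")
  case True
  then have "0 \<le> integral {a..b} F" using assms by (intro integral_nonneg) auto
  then show ?thesis using assms by auto
next
  case False
  then show ?thesis using assms not_integrable_integral by auto
qed

theorem lemma2: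
  fixes f :: "real^'n \<Rightarrow> real^'m \<Rightarrow> real^'n"
    and h :: "real^'n \<Rightarrow> real^'m \<Rightarrow> real^'m"
    and X :: "(real^'n) set" and U Y :: "(real^'m) set"
    and S :: "real^'n \<Rightarrow> real"
    and x :: "real \<Rightarrow> real^'n" and u :: "real \<Rightarrow> real^'m"
    and D :: "real \<Rightarrow> real"
    and Ks to tf g2 nu rho hg2 hnu hrho :: real
  assumes S_nonneg: "\<forall>z\<in>X. 0 \<le> S z"
    and zero_X: "0 \<in> X" and S_zero: "S 0 = 0"
    and profile: "is_traj f h X U Y to tf x u"
    and dS: "\<forall>t\<in>{to..<tf}. ((\<lambda>s. S (x s)) has_real_derivative D t) (at t within {to..tf}) \<and> \<bar>D t\<bar> \<le> Ks"
    and S_cont: "continuous_on {to..tf} (\<lambda>s. S (x s))"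
  shows "(is_max_of (psi_gamma_vals f h X U Y S) g2 \<and> is_max_of (hat_gamma_vals h Ks to tf x u) hg2 \<longrightarrow> hg2 \<le> g2)
       \<and> (is_min_of (psi_nu_vals f h X U Y S) nu \<and> is_min_of (hat_nu_vals h Ks to tf x u) hnu \<longrightarrow> nu \<le> hnu)
       \<and> (is_min_of (psi_rho_vals f h X U Y S) rho \<and> is_min_of (hat_rho_vals h Ks to tf x u) hrho \<longrightarrow> rho \<le> hrho)"
proof (intro conjI impI)
  have B: "\<bar>S (x t1) - S (x t0)\<bar> \<le> Ks * (t1 - t0)" if "to \<le> t0" "t0 < t1" "t1 \<le> tf" for t0 t1
    using S_bound[OF dS S_cont that] .
  have uupos: "0 < int_uu u t0 t1" if "int_uu u t0 t1 \<noteq> 0" for t0 t1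
    using that unfolding int_uu_def by (intro int_pos) auto
  have yypos: "0 < int_yy h x u t0 t1" if "int_yy h x u t0 t1 \<noteq> 0" for t0 t1
    using that unfolding int_yy_def by (intro int_pos) auto
  {
    assume a: "is_max_of (psi_gamma_vals f h X U Y S) g2 \<and> is_max_of (hat_gamma_vals h Ks to tf x u) hg2"
    then obtain t0 t1 where t: "hg2 = (int_yy h x u t0 t1 - Ks * (t1 - t0)) / int_uu u t0 t1"
      "to \<le> t0" "t0 < t1" "t1 \<le> tf" "int_uu u t0 t1 \<noteq> 0"
      unfolding is_max_of_def hat_gamma_vals_def by blast
    have mem: "(int_yy h x u t0 t1 + (S (x t1) - S (x t0))) / int_uu u t0 t1 \<in> psi_gamma_vals f h X U Y S"
      unfolding psi_gamma_vals_def using traj_sub[OF profile t(2-4)] t(5) by blast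
    have "hg2 \<le> (int_yy h x u t0 t1 + (S (x t1) - S (x t0))) / int_uu u t0 t1"
      unfolding t(1) using B[OF t(2-4)] uupos[OF t(5)]
      by (intro divide_right_mono) auto
    also have "\<dots> \<le> g2" using a mem unfolding is_max_of_def by blast
    finally show "hg2 \<le> g2" .
  }
  {
    assume a: "is_min_of (psi_nu_vals f h X U Y S) nu \<and> is_min_of (hat_nu_vals h Ks to tf x u) hnu"
    then obtain t0 t1 where t: "hnu = (int_uy h x u t0 t1 + Ks * (t1 - t0)) / int_uu u t0 t1"
      "to \<le> t0" "t0 < t1" "t1 \<le> tf" "int_uu u t0 t1 \<noteq> 0"
      unfolding is_min_of_def hat_nu_vals_def by blast
    have mem: "(int_uy h x u t0 t1 - (S (x t1) - S (x t0))) / int_uu u t0 t1 \<in> psi_nu_vals f h X U Y S"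
      unfolding psi_nu_vals_def using traj_sub[OF profile t(2-4)] t(5) by blast
    have "nu \<le> (int_uy h x u t0 t1 - (S (x t1) - S (x t0))) / int_uu u t0 t1"
      using a mem unfolding is_min_of_def by blast
    also have "\<dots> \<le> hnu"
      unfolding t(1) using B[OF t(2-4)] uupos[OF t(5)]
      by (intro divide_right_mono) auto
    finally show "nu \<le> hnu" .
  }
  {
    assume a: "is_min_of (psi_rho_vals f h X U Y S) rho \<and> is_min_of (hat_rho_vals h Ks to tf x u) hrho"
    then obtain t0 t1 where t: "hrho = (int_uy h x u t0 t1 + Ks * (t1 - t0)) / int_yy h x u t0 t1"
      "to \<le> t0" "t0 < t1" "t1 \<le> tf" "int_yy h x u t0 t1 \<noteq> 0"
      unfolding is_min_of_def hat_rho_vals_def by blast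
    have mem: "(int_uy h x u t0 t1 - (S (x t1) - S (x t0))) / int_yy h x u t0 t1 \<in> psi_rho_vals f h X U Y S"
      unfolding psi_rho_vals_def using traj_sub[OF profile t(2-4)] t(5) by blast
    have "rho \<le> (int_uy h x u t0 t1 - (S (x t1) - S (x t0))) / int_yy h x u t0 t1"
      using a mem unfolding is_min_of_def by blast
    also have "\<dots> \<le> hrho"
      unfolding t(1) using B[OF t(2-4)] yypos[OF t(5)]
      by (intro divide_right_mono) auto
    finally show "rho \<le> hrho" .
  }
qed

end
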